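(* Let $t$ be a normal $\lambda$-term, $v$ a closed $\lambda$-term, $\alpha,x$ variables, and $x_1,\dots,x_n$ ($n\ge0$) variables distinct from $\alpha$. If $t[\lambda x_1\dots\lambda x_n\alpha/x]\rightarrow_\beta v$, then $x\notin Fv(t)$.
   Context: $\lambda$-terms are those of the untyped $\lambda$-calculus; $Fv(t)$ is the set of free variables of $t$; a term is closed if it has no free variable; $t[u/x]$ is capture-avoiding substitution; $\rightarrow_\beta$ denotes $\beta$-reduction in zero or more steps; a term is normal if it contains no $\beta$-redex. *)

theory Defs
  imports Main
begin

text \<open>A variable index that is not bound by an enclosing Abs denotes a free variable:
  at binder depth k, Var i with i >= k denotes the free variable named i - k.\<close>

datatype dB = Var nat | App dB dB | Abs dB

primrec lift :: "dB \<Rightarrow> nat \<Rightarrow> dB" where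
  "lift (Var i) k = (if i < k then Var i else Var (Suc i))"
| "lift (App s t) k = App (lift s k) (lift t k)"
| "lift (Abs s) k = Abs (lift s (Suc k))"

primrec subst :: "dB \<Rightarrow> dB \<Rightarrow> nat \<Rightarrow> dB" where
  "subst (Var i) s k = (if k < i then Var (i - 1) else if i = k then s else Var i)"
| "subst (App t u) s k = App (subst t s k) (subst u s k)"
| "subst (Abs t) s k = Abs (subst t (lift s 0) (Suc k))"

inductive beta :: "dB \<Rightarrow> dB \<Rightarrow> bool" (infixl "\<rightarrow>\<^sub>\<beta>" 50) where
  beta: "App (Abs s) t \<rightarrow>\<^sub>\<beta> subst s t 0"
| appL: "s \<rightarrow>\<^sub>\<beta> t \<Longrightarrow> App s u \<rightarrow>\<^sub>\<beta> App t u"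
| appR: "s \<rightarrow>\<^sub>\<beta> t \<Longrightarrow> App u s \<rightarrow>\<^sub>\<beta> App u t"
| abs: "s \<rightarrow>\<^sub>\<beta> t \<Longrightarrow> Abs s \<rightarrow>\<^sub>\<beta> Abs t"

abbreviation beta_reds :: "dB \<Rightarrow> dB \<Rightarrow> bool" (infixl "\<rightarrow>\<^sub>\<beta>\<^sup>*" 50) where
  "s \<rightarrow>\<^sub>\<beta>\<^sup>* t \<equiv> beta\<^sup>*\<^sup>* s t"

primrec fv :: "dB \<Rightarrow> nat \<Rightarrow> nat set" where
  "fv (Var i) k = (if i < k then {} else {i - k})"
| "fv (App s t) k = fv s k \<union> fv t k"
| "fv (Abs t) k = fv t (Suc k)"

definition Fv :: "dB \<Rightarrow> nat set" where
  "Fv t = fv t 0"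

definition closed :: "dB \<Rightarrow> bool" where
  "closed t \<longleftrightarrow> Fv t = {}"

primrec has_redex :: "dB \<Rightarrow> bool" where
  "has_redex (Var i) = False"
| "has_redex (App s t) = ((\<exists>u. s = Abs u) \<or> has_redex s \<or> has_redex t)"
| "has_redex (Abs t) = has_redex t"

definition normal :: "dB \<Rightarrow> bool" where
  "normal t \<longleftrightarrow> \<not> has_redex t"

text \<open>Capture-avoiding substitution t[u/x] of the term u for the free variable x
  (no decrement of other variables).\<close>
primrec fsubst :: "dB \<Rightarrow> dB \<Rightarrow> nat \<Rightarrow> dB" where
  "fsubst (Var i) u x = (if i = x then u else Var i)"
| "fsubst (App s t) u x = App (fsubst s u x) (fsubst t u x)"
| "fsubst (Abs t) u x = Abs (fsubst t (lift u 0) (Suc x))"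

text \<open>The term \<lambda>x1...\<lambda>xn.\<alpha> with \<alpha> free (distinct from all xi).\<close>
definition lams_var :: "nat \<Rightarrow> nat \<Rightarrow> dB" where
  "lams_var n \<alpha> = (Abs ^^ n) (Var (\<alpha> + n))"

end

theory Submission
  imports Defs
begin

inductive hd :: "nat \<Rightarrow> dB \<Rightarrow> bool" where
  hV: "hd a (Var a)"
| hA: "hd a s \<Longrightarrow> hd a (App s u)"
| hL: "hd (Suc a) s \<Longrightarrow> hd a (Abs s)"

primrec neutral :: "dB \<Rightarrow> bool" where
  "neutral (Var i) = True"
| "neutral (App s u) = neutral s"
| "neutral (Abs s) = False"

primrec head :: "dB \<Rightarrow> dB" where
  "head (Var i) = Var i"
| "head (App s u) = head s"
| "head (Abs s) = Abs s"

lemma hd_subst: "hd a s \<Longrightarrow> k < a \<Longrightarrow> hd (a - 1) (subst s t k)"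
proof (induction a s arbitrary: k t rule: hd.induct)
  case (hV a) then show ?case by (simp add: hd.hV)
next
  case (hA a s u) then show ?case by (simp add: hd.hA)
next
  case (hL a s)
  have "hd (Suc a - 1) (subst s (lift t 0) (Suc k))" using hL by simp
  moreover have "Suc (a - 1) = a" using hL by simp
  ultimately show ?case by (simp add: hd.hL)
qed

lemma hd_beta: "s \<rightarrow>\<^sub>\<beta> s' \<Longrightarrow> hd a s \<Longrightarrow> hd a s'"
proof (induction s s' arbitrary: a rule: beta.induct)
  case (beta s t)
  then have "hd a (Abs s)" by (cases rule: hd.cases) auto
  then have "hd (Suc a) s" by (cases rule: hd.cases) auto
  from hd_subst[OF this] show ?case by simp
next
  case (appL s t u)
  from appL.prems have "hd a s" by (cases rule: hd.cases) auto
  then show ?case using appL.IH by (auto intro: hd.hA)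
next
  case (appR s t u)
  from appR.prems have "hd a u" by (cases rule: hd.cases) auto
  then show ?case by (auto intro: hd.hA)
next
  case (abs s t)
  from abs.prems have "hd (Suc a) s" by (cases rule: hd.cases) auto
  then show ?case using abs.IH by (auto intro: hd.hL)
qed

lemma hd_reds: "s \<rightarrow>\<^sub>\<beta>\<^sup>* s' \<Longrightarrow> hd a s \<Longrightarrow> hd a s'"
  by (induction rule: rtranclp_induct) (auto intro: hd_beta)

lemma hd_fv: "hd a s \<Longrightarrow> k \<le> a \<Longrightarrow> a - k \<in> fv s k"
proof (induction a s arbitrary: k rule: hd.induct)
  case (hL a s)
  then have "Suc a - Suc k \<in> fv s (Suc k)" by (metis Suc_le_mono)
  then show ?case by simp
qed auto

lemma fv_Suc: "x \<in> fv t (Suc k) \<longleftrightarrow> Suc x \<in> fv t k"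
  by (induction t arbitrary: k) auto

lemma lift_Abs_pow: "lift ((Abs ^^ n) s) k = (Abs ^^ n) (lift s (k + n))"
  by (induction n arbitrary: k) auto

lemma lift_lams: "lift (lams_var n a) 0 = lams_var n (Suc a)"
  unfolding lams_var_def by (simp add: lift_Abs_pow)

lemma hd_Abs_pow: "hd (a + n) s \<Longrightarrow> hd a ((Abs ^^ n) s)"
proof (induction n arbitrary: a)
  case (Suc n)
  then have "hd (Suc a) ((Abs ^^ n) s)" by simp
  then show ?case by (simp add: hd.hL)
qed simp

lemma hd_lams: "hd a (lams_var n a)"
  unfolding lams_var_def by (rule hd_Abs_pow) (rule hd.hV)

lemma abs_reds: "Abs s \<rightarrow>\<^sub>\<beta>\<^sup>* w \<Longrightarrow> \<exists>s'. w = Abs s' \<and> s \<rightarrow>\<^sub>\<beta>\<^sup>* s'"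
proof (induction rule: rtranclp_induct)
  case (step y z)
  then obtain s' where "y = Abs s'" "s \<rightarrow>\<^sub>\<beta>\<^sup>* s'" by blast
  with step(2) show ?case
    by (cases rule: beta.cases) auto
qed auto

lemma neutral_not_Abs: "neutral s \<Longrightarrow> s \<noteq> Abs u"
  by (cases s) auto

lemma neutral_reds: "App s u \<rightarrow>\<^sub>\<beta>\<^sup>* w \<Longrightarrow> neutral s \<Longrightarrow>
   \<exists>s' u'. w = App s' u' \<and> s \<rightarrow>\<^sub>\<beta>\<^sup>* s' \<and> u \<rightarrow>\<^sub>\<beta>\<^sup>* u' \<and> neutral s'"
proof (induction rule: rtranclp_induct)
  case (step y z)
  then obtain s' u' where h: "y = App s' u'" "s \<rightarrow>\<^sub>\<beta>\<^sup>* s'" "u \<rightarrow>\<^sub>\<beta>\<^sup>* u'" "neutral s'" by blast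
  have nb: "\<And>s1 s2. s1 \<rightarrow>\<^sub>\<beta> s2 \<Longrightarrow> neutral s1 \<Longrightarrow> neutral s2"
  proof -
    fix s1 s2 assume "s1 \<rightarrow>\<^sub>\<beta> s2" "neutral s1"
    then show "neutral s2"
      by (induction rule: beta.induct) auto
  qed
  from step(2) h show ?case
    by (cases rule: beta.cases) (auto intro: rtranclp.rtrancl_into_rtrancl nb)
qed auto

lemma normal_neutral: "\<not> has_redex t \<Longrightarrow> (\<forall>u. t \<noteq> Abs u) \<Longrightarrow> neutral t"
  by (induction t) auto

lemma fsubst_neutral: "neutral s \<Longrightarrow> head s \<noteq> Var x \<Longrightarrow> neutral (fsubst s L x)"
  by (induction s) auto

lemma fsubst_head: "head t = Var x \<Longrightarrow> hd a (fsubst t (lams_var n a) x)"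
proof (induction t)
  case (Var i) then show ?case by (simp add: hd_lams)
next
  case (App s u) then show ?case by (simp add: hd.hA)
qed auto

lemma main: "\<not> has_redex t \<Longrightarrow> x \<in> fv t 0 \<Longrightarrow> fsubst t (lams_var n a) x \<rightarrow>\<^sub>\<beta>\<^sup>* v
  \<Longrightarrow> a \<in> fv v 0"
proof (induction t arbitrary: x a v)
  case (Var i)
  then have "hd a v" using hd_reds hd_lams by auto
  from hd_fv[OF this, of 0] show ?case by simp
next
  case (Abs t)
  then have r: "Abs (fsubst t (lams_var n (Suc a)) (Suc x)) \<rightarrow>\<^sub>\<beta>\<^sup>* v"
    by (simp add: lift_lams)
  from abs_reds[OF r] obtain s' where s': "v = Abs s'"
    "fsubst t (lams_var n (Suc a)) (Suc x) \<rightarrow>\<^sub>\<beta>\<^sup>* s'" by blast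
  have "Suc x \<in> fv t 0" using Abs(3) fv_Suc by simp
  with Abs s' have "Suc a \<in> fv s' 0" by auto
  then show ?case using s' fv_Suc by simp
next
  case (App s u)
  show ?case
  proof (cases "head s = Var x")
    case True
    then have "hd a (fsubst (App s u) (lams_var n a) x)"
      using fsubst_head[of "App s u"] by simp
    then have "hd a v" using App(5) hd_reds by blast
    from hd_fv[OF this, of 0] show ?thesis by simp
  next
    case False
    have ns: "neutral s" using App(3) normal_neutral[of s] by auto
    then have "neutral (fsubst s (lams_var n a) x)" using False fsubst_neutral by blast
    from neutral_reds[OF App(5)[simplified] this] obtain s' u' where
      h: "v = App s' u'" "fsubst s (lams_var n a) x \<rightarrow>\<^sub>\<beta>\<^sup>* s'"
      "fsubst u (lams_var n a) x \<rightarrow>\<^sub>\<beta>\<^sup>* u'" by auto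
    from App(4) have "x \<in> fv s 0 \<or> x \<in> fv u 0" by simp
    then show ?thesis
    proof
      assume "x \<in> fv s 0"
      with App(1)[of x a s'] App(3) h show ?thesis by simp
    next
      assume "x \<in> fv u 0"
      with App(2)[of x a u'] App(3) h show ?thesis by simp
    qed
  qed
qed

theorem corollary2p1p3:
  fixes t v :: dB and \<alpha> x n :: nat
  assumes "normal t"
    and "closed v"
    and "fsubst t (lams_var n \<alpha>) x \<rightarrow>\<^sub>\<beta>\<^sup>* v"
  shows "x \<notin> Fv t"
proof
  assume "x \<in> Fv t"
  with main[of t x n \<alpha> v] assms have "\<alpha> \<in> fv v 0" by (simp add: normal_def Fv_def)
  with assms(2) show False by (simp add: closed_def Fv_def)
qed

end
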